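(* Let $(M,g)$ be a space-time of dimension $n=4$ and $u$ a time-like unit vector field ($u_ku^k=-1$) that is Weyl compatible, i.e. $$(u_iC_{jklm}+u_jC_{kilm}+u_kC_{ijlm})u^m=0,$$ where $C_{abcd}$ is the Weyl tensor. Let $E_{ab}=u^bu^cC_{abcd}$-type electric part be defined by $E_{ad}=u^bu^cC_{abcd}$. Then $$C_{abcd}=2\big(u_au_dE_{bc}-u_au_cE_{bd}+u_bu_cE_{ad}-u_bu_dE_{ac}\big)+g_{ad}E_{bc}-g_{ac}E_{bd}+g_{bc}E_{ad}-g_{bd}E_{ac},$$ and $C^2=8E^2$, where $C^2=C_{abcd}C^{abcd}$ and $E^2=E_{ab}E^{ab}$.
   Context: Indices are raised and lowered with the metric $g$. *)

theory Defs
  imports "HOL-Analysis.Analysis" "HOL-Library.Numeral_Type"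
begin

text \<open>Pointwise (tangent-space) formalization. Indices range over the 4-element type 4.
  The metric at the point is a matrix g :: real^4^4 (components g$a$b, lower indices);
  its inverse (upper indices) is matrix_inv g.\<close>

definition minkowski :: "real^4^4" where
  "minkowski = (\<chi> i j. if i = j then (if i = 0 then -1 else 1) else 0)"

definition lorentzian :: "real^4^4 \<Rightarrow> bool" where
  "lorentzian g \<longleftrightarrow> transpose g = g \<and> (\<exists>P. transpose P ** g ** P = minkowski)"

definition lower :: "real^4^4 \<Rightarrow> (4 \<Rightarrow> real) \<Rightarrow> (4 \<Rightarrow> real)" where
  "lower g v = (\<lambda>a. \<Sum>b\<in>UNIV. g$a$b * v b)"

definition weyl_tensor :: "real^4^4 \<Rightarrow> (4 \<Rightarrow> 4 \<Rightarrow> 4 \<Rightarrow> 4 \<Rightarrow> real) \<Rightarrow> bool" where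
  "weyl_tensor g C \<longleftrightarrow>
     (\<forall>a b c d. C a b c d = - C b a c d) \<and>
     (\<forall>a b c d. C a b c d = - C a b d c) \<and>
     (\<forall>a b c d. C a b c d = C c d a b) \<and>
     (\<forall>a b c d. C a b c d + C a c d b + C a d b c = 0) \<and>
     (\<forall>b d. (\<Sum>a\<in>UNIV. \<Sum>c\<in>UNIV. (matrix_inv g)$a$c * C a b c d) = 0)"

definition weyl_compatible ::
  "real^4^4 \<Rightarrow> (4 \<Rightarrow> 4 \<Rightarrow> 4 \<Rightarrow> 4 \<Rightarrow> real) \<Rightarrow> (4 \<Rightarrow> real) \<Rightarrow> bool" where
  "weyl_compatible g C u \<longleftrightarrow>
     (\<forall>i j k l. (\<Sum>m\<in>UNIV. (lower g u i * C j k l m + lower g u j * C k i l m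
                             + lower g u k * C i j l m) * u m) = 0)"

definition electric :: "(4 \<Rightarrow> 4 \<Rightarrow> 4 \<Rightarrow> 4 \<Rightarrow> real) \<Rightarrow> (4 \<Rightarrow> real) \<Rightarrow> 4 \<Rightarrow> 4 \<Rightarrow> real" where
  "electric C u a d = (\<Sum>b\<in>UNIV. \<Sum>c\<in>UNIV. u b * u c * C a b c d)"

definition sq4 :: "real^4^4 \<Rightarrow> (4 \<Rightarrow> 4 \<Rightarrow> 4 \<Rightarrow> 4 \<Rightarrow> real) \<Rightarrow> real" where
  "sq4 g T = (\<Sum>a\<in>UNIV. \<Sum>b\<in>UNIV. \<Sum>c\<in>UNIV. \<Sum>d\<in>UNIV.
     \<Sum>p\<in>UNIV. \<Sum>q\<in>UNIV. \<Sum>r\<in>UNIV. \<Sum>s\<in>UNIV.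
       T a b c d * (matrix_inv g)$a$p * (matrix_inv g)$b$q * (matrix_inv g)$c$r
         * (matrix_inv g)$d$s * T p q r s)"

definition sq2 :: "real^4^4 \<Rightarrow> (4 \<Rightarrow> 4 \<Rightarrow> real) \<Rightarrow> real" where
  "sq2 g T = (\<Sum>a\<in>UNIV. \<Sum>b\<in>UNIV. \<Sum>p\<in>UNIV. \<Sum>q\<in>UNIV.
       T a b * (matrix_inv g)$a$p * (matrix_inv g)$b$q * T p q)"

end

theory Submission
  imports Defs
begin

lemma ex4: "(x::4) = 0 \<or> x = 1 \<or> x = 2 \<or> x = 3" using exhaust_4[of x] by auto
lemma all4: "(\<forall>i::4. P i) \<longleftrightarrow> P 0 \<and> P 1 \<and> P 2 \<and> P 3"
  using ex4 by metis

lemma four_eq: "(4::4) = 0" by simp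
lemma s4: "sum f (UNIV::4 set) = f 0 + f 1 + f 2 + f 3"
  using sum_4[of f] by (simp add: four_eq ac_simps)
lemma p4: "prod f (UNIV::4 set) = f 0 * f 1 * f 2 * f 3"
  unfolding UNIV_4 by (simp add: four_eq ac_simps)

definition quadf :: "real^4^4 \<Rightarrow> real^4 \<Rightarrow> real" where
  "quadf A x = x \<bullet> (A *v x)"

lemma quadf_transform: "quadf (transpose P ** A ** P) x = quadf A (P *v x)"
proof -
  have "quadf (transpose P ** A ** P) x = x \<bullet> (transpose P *v (A *v (P *v x)))"
    unfolding quadf_def by (simp add: matrix_vector_mul_assoc matrix_mul_assoc)
  also have "\<dots> = x \<bullet> ((A *v (P *v x)) v* P)" by simp
  also have "\<dots> = (A *v (P *v x)) \<bullet> (P *v x)" by (metis inner_commute dot_lmul_matrix)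
  also have "\<dots> = quadf A (P *v x)" unfolding quadf_def by (simp add: inner_commute)
  finally show ?thesis .
qed

lemma quadf_sum: "quadf A x = (\<Sum>i\<in>UNIV. \<Sum>j\<in>UNIV. x$i * A$i$j * x$j)"
  unfolding quadf_def inner_vec_def matrix_vector_mult_def
  by (simp add: sum_distrib_left mult_ac)

lemma det_mink: "det minkowski = -1"
  by (subst det_diagonal) (auto simp: minkowski_def p4)

lemma mink_sq: "minkowski ** minkowski = mat 1"
  unfolding vec_eq_iff
proof (intro allI)
  fix i j :: 4
  show "(minkowski ** minkowski) $ i $ j = mat 1 $ i $ j"
    using ex4[of i] ex4[of j]
    by (elim disjE) (simp_all add: matrix_matrix_mult_def minkowski_def mat_def s4)
qed

definition rr :: "real^4 \<Rightarrow> real" where "rr x = (x$1)^2 + (x$2)^2 + (x$3)^2"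

definition lamM :: "real^4 \<Rightarrow> real^4^4" where
 "lamM x = (\<chi> i j. if i = 0 \<and> j = 0 then 1 + rr x else if i = 0 then 2 * x$j else if j = 0 then 2 * x$i
            else (if i = j then 1 - rr x else 0) + 2 * x$i * x$j)"

lemma lamM_lorentz:
  "transpose (lamM x) ** minkowski ** lamM x = ((1 - rr x)^2) *\<^sub>R minkowski"
  unfolding vec_eq_iff all4
  by (simp add: matrix_matrix_mult_def transpose_def lamM_def minkowski_def s4 rr_def
      algebra_simps power2_eq_square)

lemma ginv_frame:
  fixes Q g :: "real^4^4"
  assumes qg: "transpose Q ** g ** Q = minkowski" and iq: "invertible Q"
  shows "invertible g" "matrix_inv g = Q ** minkowski ** transpose Q"
    "matrix_inv g ** g = mat 1" "g ** matrix_inv g = mat 1"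
proof -
  obtain Qi where q1: "Q ** Qi = mat 1" using iq invertible_right_inverse by blast
  define M where "M = Q ** minkowski ** transpose Q"
  have "M ** g ** Q = Q ** minkowski ** (transpose Q ** g ** Q)"
    unfolding M_def by (simp add: matrix_mul_assoc)
  also have "\<dots> = Q" using qg mink_sq by (simp add: matrix_mul_assoc[symmetric])
  finally have "M ** g ** Q ** Qi = Q ** Qi" by simp
  hence mg: "M ** g = mat 1" using q1 by (simp add: matrix_mul_assoc[symmetric])
  hence gm: "g ** M = mat 1" using matrix_left_right_inverse by blast
  show ig: "invertible g" unfolding invertible_def using mg gm by blast
  have ex: "\<exists>A'. g ** A' = mat 1 \<and> A' ** g = mat 1" using mg gm by blast
  have s: "g ** matrix_inv g = mat 1 \<and> matrix_inv g ** g = mat 1"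
    unfolding matrix_inv_def by (rule someI_ex[OF ex])
  have "matrix_inv g = matrix_inv g ** (g ** M)" using gm by simp
  also have "\<dots> = M" using s by (simp add: matrix_mul_assoc)
  finally show mi: "matrix_inv g = Q ** minkowski ** transpose Q" unfolding M_def .
  show "matrix_inv g ** g = mat 1" "g ** matrix_inv g = mat 1" using mi mg gm unfolding M_def by simp_all
qed


lemma frame:
  assumes lor: "lorentzian g" and un: "(\<Sum>k\<in>UNIV. lower g u k * u k) = -1"
  obtains Q k where "transpose Q ** g ** Q = minkowski" "invertible Q" "k \<noteq> 0"
    "\<And>s. Q$s$0 = k * u s"
proof -
  obtain P where P: "transpose P ** g ** P = minkowski" using lor unfolding lorentzian_def by blast
  have "det (transpose P ** g ** P) = -1" using P det_mink by simp
  hence "det P \<noteq> 0" by (auto simp: det_mul)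
  hence "invertible P" by (simp add: invertible_det_nz)
  then obtain Pi where pp: "P ** Pi = mat 1" using invertible_right_inverse by blast
  define uv :: "real^4" where "uv = (\<chi> s. u s)"
  define w0 where "w0 = Pi *v uv"
  have pw: "P *v w0 = uv" unfolding w0_def using pp by (simp add: matrix_vector_mul_assoc)
  have "quadf minkowski w0 = quadf g uv" using quadf_transform[of P g w0] P pw by simp
  also have "\<dots> = (\<Sum>k\<in>UNIV. lower g u k * u k)"
    unfolding quadf_sum lower_def uv_def by (simp add: sum_distrib_left sum_distrib_right mult_ac)
  finally have q0: "- ((w0$0)^2) + (w0$1)^2 + (w0$2)^2 + (w0$3)^2 = -1"
    using un by (simp add: quadf_sum s4 minkowski_def power2_eq_square)
  define sg :: real where "sg = (if w0$0 > 0 then 1 else -1)"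
  define w where "w = sg *s w0"
  have sg2: "sg * sg = 1" unfolding sg_def by simp
  have "(w0$0)^2 \<ge> 1" using q0 by (smt (verit) zero_le_power2)
  hence "w0$0 \<noteq> 0" by auto
  hence wpos: "w$0 > 0" unfolding w_def sg_def by auto
  have wc: "(w$1)^2 + (w$2)^2 + (w$3)^2 = (w$0 - 1) * (w$0 + 1)"
  proof -
    have "(w$1)^2 + (w$2)^2 + (w$3)^2 - (w$0)^2 = sg * sg * (- ((w0$0)^2) + (w0$1)^2 + (w0$2)^2 + (w0$3)^2)"
      unfolding w_def by (simp add: power2_eq_square algebra_simps)
    also have "\<dots> = -1" using q0 sg2 by simp
    finally show ?thesis by (simp add: algebra_simps power2_eq_square)
  qed
  define x :: "real^4" where "x = (\<chi> i. w$i / (1 + w$0))"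
  have ne: "1 + w$0 \<noteq> 0" "w$0 + 1 \<noteq> 0" using wpos by linarith+
  have rx: "rr x = (w$0 - 1) / (w$0 + 1)"
  proof -
    have "rr x = ((w$1)^2 + (w$2)^2 + (w$3)^2) / (1 + w$0)^2"
      unfolding rr_def x_def by (simp add: power_divide add_divide_distrib)
    also have "\<dots> = (w$0 - 1) * (w$0 + 1) / ((w$0 + 1) * (w$0 + 1))"
      unfolding wc by (simp add: power2_eq_square add.commute)
    also have "\<dots> = (w$0 - 1) / (w$0 + 1)" using ne by simp
    finally show ?thesis .
  qed
  define dd where "dd = 1 - rr x"
  have dd: "dd = 2 / (w$0 + 1)" unfolding dd_def rx using ne by (simp add: field_simps)
  have ddne: "dd \<noteq> 0" unfolding dd using ne by simp
  have colM: "(lamM x)$i$0 = dd * w$i" for i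
  proof (cases "i = 0")
    case True
    have "1 + rr x = dd * w$0" unfolding dd rx using ne by (simp add: field_simps)
    thus ?thesis using True by (simp add: lamM_def)
  next
    case False
    thus ?thesis unfolding dd using ne by (simp add: lamM_def x_def field_simps)
  qed
  define L where "L = (1 / dd) *\<^sub>R lamM x"
  have LL: "transpose L ** minkowski ** L = minkowski"
  proof -
    have "transpose L ** minkowski ** L = ((1/dd) * (1/dd)) *\<^sub>R (transpose (lamM x) ** minkowski ** lamM x)"
      unfolding L_def by (simp add: transpose_scalar matrix_scalar_ac scalar_matrix_assoc[symmetric])
    also have "\<dots> = minkowski" unfolding lamM_lorentz dd_def[symmetric] using ddne
      by (simp add: power2_eq_square)
    finally show ?thesis .
  qed
  have colL: "L$i$0 = w$i" for i unfolding L_def using colM ddne by simp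
  define Q where "Q = P ** L"
  have QQ: "transpose Q ** g ** Q = minkowski"
  proof -
    have "transpose Q ** g ** Q = transpose L ** (transpose P ** g ** P) ** L"
      unfolding Q_def by (simp add: matrix_transpose_mul matrix_mul_assoc)
    thus ?thesis using P LL by simp
  qed
  have "det (transpose Q ** g ** Q) = -1" using QQ det_mink by simp
  hence "det Q \<noteq> 0" by (auto simp: det_mul)
  hence iQ: "invertible Q" by (simp add: invertible_det_nz)
  have sg0: "sg \<noteq> 0" unfolding sg_def by simp
  have col: "Q$s$0 = sg * u s" for s
  proof -
    have "Q$s$0 = (\<Sum>j\<in>UNIV. P$s$j * w$j)"
      unfolding Q_def matrix_matrix_mult_def by (simp add: colL)
    also have "\<dots> = sg * (P *v w0)$s"
      unfolding w_def by (simp add: matrix_vector_mult_def sum_distrib_left mult_ac)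
    finally show ?thesis using pw unfolding uv_def by simp
  qed
  show ?thesis using that[OF QQ iQ sg0 col] .
qed

lemma zero3d:
  fixes X :: "4 \<Rightarrow> 4 \<Rightarrow> 4 \<Rightarrow> 4 \<Rightarrow> real"
  assumes a1: "\<And>a b c d. X a b c d = - X b a c d"
    and a2: "\<And>a b c d. X a b c d = - X a b d c"
    and ps: "\<And>a b c d. X a b c d = X c d a b"
    and z: "\<And>a b c. X a b c 0 = 0"
    and tr: "\<And>b d. X 1 b 1 d + X 2 b 2 d + X 3 b 3 d = X 0 b 0 d"
  shows "X a b c d = 0"
proof -
  have z3: "X a b 0 d = 0" for a b d using a2[of a b 0 d] z[of a b d] by simp
  have z1: "X 0 b c d = 0" for b c d using ps[of 0 b c d] z3[of c d b] by simp
  have z2: "X a 0 c d = 0" for a c d using a1[of a 0 c d] z1[of a c d] by simp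
  have d1: "X a a c d = 0" for a c d using a1[of a a c d] by simp
  have d2: "X a b c c = 0" for a b c using a2[of a b c c] by simp
  have nr: "X 1 0 c d = - X 0 1 c d"
    "X c d 1 0 = - X c d 0 1"
    "X 2 0 c d = - X 0 2 c d"
    "X c d 2 0 = - X c d 0 2"
    "X 3 0 c d = - X 0 3 c d"
    "X c d 3 0 = - X c d 0 3"
    "X 2 1 c d = - X 1 2 c d"
    "X c d 2 1 = - X c d 1 2"
    "X 3 1 c d = - X 1 3 c d"
    "X c d 3 1 = - X c d 1 3"
    "X 3 2 c d = - X 2 3 c d"
    "X c d 3 2 = - X c d 2 3"
    "X 0 2 0 1 = X 0 1 0 2"
    "X 0 3 0 1 = X 0 1 0 3"
    "X 0 3 0 2 = X 0 2 0 3"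
    "X 1 2 0 1 = X 0 1 1 2"
    "X 1 2 0 2 = X 0 2 1 2"
    "X 1 2 0 3 = X 0 3 1 2"
    "X 1 3 0 1 = X 0 1 1 3"
    "X 1 3 0 2 = X 0 2 1 3"
    "X 1 3 0 3 = X 0 3 1 3"
    "X 1 3 1 2 = X 1 2 1 3"
    "X 2 3 0 1 = X 0 1 2 3"
    "X 2 3 0 2 = X 0 2 2 3"
    "X 2 3 0 3 = X 0 3 2 3"
    "X 2 3 1 2 = X 1 2 2 3"
    "X 2 3 1 3 = X 1 3 2 3" for c d
    by (rule a1 a2 ps)+
  have tr': "X 1 b 1 d + X 2 b 2 d + X 3 b 3 d = 0" for b d using tr[of b d] z1[of b 0 d] by simp
  have e11: "X 1 2 1 2 + X 1 3 1 3 = 0" using tr'[of 1 1] by (simp add: nr d1 d2)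
  have e22: "X 1 2 1 2 + X 2 3 2 3 = 0" using tr'[of 2 2] by (simp add: nr d1 d2)
  have e33: "X 1 3 1 3 + X 2 3 2 3 = 0" using tr'[of 3 3] by (simp add: nr d1 d2)
  have k1: "X 1 2 1 2 = 0" "X 1 3 1 3 = 0" "X 2 3 2 3 = 0" using e11 e22 e33 by linarith+
  have k2: "X 1 3 2 3 = 0" using tr'[of 1 2] by (simp add: nr d1 d2)
  have k3: "X 1 2 2 3 = 0" using tr'[of 1 3] by (simp add: nr d1 d2)
  have k4: "X 1 2 1 3 = 0" using tr'[of 2 3] by (simp add: nr d1 d2)
  show ?thesis
    using ex4[of a] ex4[of b] ex4[of c] ex4[of d]
    by (elim disjE) (simp_all add: nr d1 d2 z1 z2 z3 z k1 k2 k3 k4)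
qed
definition tr4 :: "real^4^4 \<Rightarrow> (4\<Rightarrow>4\<Rightarrow>4\<Rightarrow>4\<Rightarrow>real) \<Rightarrow> 4\<Rightarrow>4\<Rightarrow>4\<Rightarrow>4\<Rightarrow>real" where
 "tr4 Q T a b c d = (\<Sum>x\<in>UNIV. \<Sum>y\<in>UNIV. \<Sum>z\<in>UNIV. \<Sum>w\<in>UNIV. T x y z w * Q$x$a * Q$y$b * Q$z$c * Q$w$d)"

lemma L_in2: "(\<Sum>x\<in>UNIV. \<Sum>y\<in>UNIV. \<Sum>z\<in>UNIV. \<Sum>w\<in>UNIV. (F x y z w::real)) = (\<Sum>x\<in>UNIV. \<Sum>z\<in>UNIV. \<Sum>y\<in>UNIV. \<Sum>w\<in>UNIV. F x y z w)"
  apply (rule sum.cong[OF refl]) apply (rule sum.swap) done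
lemma L_in3: "(\<Sum>x\<in>UNIV. \<Sum>y\<in>UNIV. \<Sum>z\<in>UNIV. \<Sum>w\<in>UNIV. (F x y z w::real)) = (\<Sum>x\<in>UNIV. \<Sum>y\<in>UNIV. \<Sum>w\<in>UNIV. \<Sum>z\<in>UNIV. F x y z w)"
  apply (rule sum.cong[OF refl]) apply (rule sum.cong[OF refl]) apply (rule sum.swap) done
lemma L4: "(\<Sum>x\<in>UNIV. \<Sum>y\<in>UNIV. \<Sum>z\<in>UNIV. \<Sum>w\<in>UNIV. (F x y z w::real)) = (\<Sum>z\<in>UNIV. \<Sum>w\<in>UNIV. \<Sum>x\<in>UNIV. \<Sum>y\<in>UNIV. F x y z w)"
proof -
  have "(\<Sum>x\<in>UNIV. \<Sum>y\<in>UNIV. \<Sum>z\<in>UNIV. \<Sum>w\<in>UNIV. F x y z w) = (\<Sum>x\<in>UNIV. \<Sum>z\<in>UNIV. \<Sum>y\<in>UNIV. \<Sum>w\<in>UNIV. F x y z w)" by (rule L_in2)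
  also have "\<dots> = (\<Sum>z\<in>UNIV. \<Sum>x\<in>UNIV. \<Sum>y\<in>UNIV. \<Sum>w\<in>UNIV. F x y z w)" by (rule sum.swap)
  also have "\<dots> = (\<Sum>z\<in>UNIV. \<Sum>x\<in>UNIV. \<Sum>w\<in>UNIV. \<Sum>y\<in>UNIV. F x y z w)" by (rule L_in3)
  also have "\<dots> = (\<Sum>z\<in>UNIV. \<Sum>w\<in>UNIV. \<Sum>x\<in>UNIV. \<Sum>y\<in>UNIV. F x y z w)" by (rule L_in2)
  finally show ?thesis .
qed

lemma tr4_swap12: "tr4 Q T b a c d = tr4 Q (\<lambda>x y z w. T y x z w) a b c d"
  unfolding tr4_def apply (rule trans[OF sum.swap]) by (intro sum.cong refl) (simp add: mult_ac)
lemma tr4_swap34: "tr4 Q T a b d c = tr4 Q (\<lambda>x y z w. T x y w z) a b c d"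
  unfolding tr4_def apply (rule trans[OF L_in3]) by (intro sum.cong refl) (simp add: mult_ac)
lemma tr4_pair: "tr4 Q T c d a b = tr4 Q (\<lambda>x y z w. T z w x y) a b c d"
  unfolding tr4_def apply (rule trans[OF L4]) by (intro sum.cong refl) (simp add: mult_ac)
lemma tr4_neg: "tr4 Q (\<lambda>x y z w. - T x y z w) a b c d = - tr4 Q T a b c d"
  unfolding tr4_def by (simp add: sum_negf)

lemma peel:
  fixes Q :: "real^4^4"
  assumes iq: "invertible Q" and h: "\<And>a. (\<Sum>x\<in>UNIV. Q$x$a * f x) = 0"
  shows "f x = 0"
proof -
  obtain Qi where qq: "Q ** Qi = mat 1" using iq unfolding invertible_def by blast
  define fv :: "real^4" where "fv = (\<chi> x. f x)"
  have "fv v* Q = 0" using h unfolding vec_eq_iff vector_matrix_mult_def fv_def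
    by (simp add: mult_ac)
  hence "(fv v* Q) v* Qi = 0" by (simp add: vec_eq_iff vector_matrix_mult_def)
  hence "fv = 0" using qq by (simp add: vector_matrix_mul_assoc)
  thus ?thesis unfolding fv_def vec_eq_iff by simp
qed

lemma vanish:
  fixes D :: "4 \<Rightarrow> 4 \<Rightarrow> 4 \<Rightarrow> 4 \<Rightarrow> real"
  assumes lor: "lorentzian g" and un: "(\<Sum>k\<in>UNIV. lower g u k * u k) = -1"
    and a1: "\<And>a b c d. D a b c d = - D b a c d"
    and a2: "\<And>a b c d. D a b c d = - D a b d c"
    and ps: "\<And>a b c d. D a b c d = D c d a b"
    and tr: "\<And>b d. (\<Sum>a\<in>UNIV. \<Sum>c\<in>UNIV. matrix_inv g $a$c * D a b c d) = 0"
    and du: "\<And>a b c. (\<Sum>d\<in>UNIV. D a b c d * u d) = 0"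
  shows "D a b c d = 0"
proof -
  obtain Q k where QQ: "transpose Q ** g ** Q = minkowski" and iQ: "invertible Q" and k: "k \<noteq> 0"
    and col: "\<And>s. Q$s$0 = k * u s"
    using frame[OF lor un] by blast
  have gi: "matrix_inv g = Q ** minkowski ** transpose Q" using ginv_frame[OF QQ iQ] by simp
  define X where "X = tr4 Q D"
  have f1: "(\<lambda>x y z w. D y x z w) = (\<lambda>x y z w. - D x y z w)" using a1 by (intro ext) metis
  have f2: "(\<lambda>x y z w. D x y w z) = (\<lambda>x y z w. - D x y z w)" using a2 by (intro ext) metis
  have f3: "(\<lambda>x y z w. D z w x y) = D" using ps by (intro ext) metis
  have X1: "X a b c d = - X b a c d" for a b c d
    unfolding X_def tr4_swap12[of Q D a b] f1 tr4_neg by simp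
  have X2: "X a b c d = - X a b d c" for a b c d
    unfolding X_def tr4_swap34[of Q D a b c d] f2 tr4_neg by simp
  have X3: "X a b c d = X c d a b" for a b c d
    unfolding X_def tr4_pair[of Q D a b c d] f3 by simp
  have X0: "X a b c 0 = 0" for a b c
  proof -
    have "X a b c 0 = (\<Sum>x\<in>UNIV. \<Sum>y\<in>UNIV. \<Sum>z\<in>UNIV. Q$x$a * Q$y$b * Q$z$c * k * (\<Sum>w\<in>UNIV. D x y z w * u w))"
      unfolding X_def tr4_def col apply (simp only: sum_distrib_left)
      by (intro sum.cong refl) (simp add: mult_ac)
    thus ?thesis using du by simp
  qed
  have Xtr: "(\<Sum>a\<in>UNIV. \<Sum>c\<in>UNIV. minkowski$a$c * X a b c d) = 0" for b d
  proof -
    define G where "G x z = (\<Sum>y\<in>UNIV. \<Sum>w\<in>UNIV. D x y z w * Q$y$b * Q$w$d)" for x z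
    have XG: "X a b c d = (\<Sum>x\<in>UNIV. \<Sum>z\<in>UNIV. Q$x$a * Q$z$c * G x z)" for a c
      unfolding X_def tr4_def G_def apply (subst L_in2)
      apply (rule sum.cong[OF refl]) apply (rule sum.cong[OF refl])
      by (simp add: sum_distrib_left mult_ac)
    have "(\<Sum>a\<in>UNIV. \<Sum>c\<in>UNIV. minkowski$a$c * X a b c d) =
       (\<Sum>a\<in>UNIV. \<Sum>c\<in>UNIV. \<Sum>x\<in>UNIV. \<Sum>z\<in>UNIV. Q$x$a * minkowski$a$c * Q$z$c * G x z)"
      unfolding XG by (simp add: sum_distrib_left mult_ac)
    also have "\<dots> = (\<Sum>x\<in>UNIV. \<Sum>z\<in>UNIV. \<Sum>a\<in>UNIV. \<Sum>c\<in>UNIV. Q$x$a * minkowski$a$c * Q$z$c * G x z)"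
      by (rule L4)
    also have "\<dots> = (\<Sum>x\<in>UNIV. \<Sum>z\<in>UNIV. matrix_inv g $x$z * G x z)"
    proof -
      have "(\<Sum>a\<in>UNIV. \<Sum>c\<in>UNIV. Q$x$a * minkowski$a$c * Q$z$c) = matrix_inv g $x$z" for x z
        unfolding gi by (simp add: matrix_matrix_mult_def transpose_def sum_distrib_right) (rule sum.swap)
      thus ?thesis by (simp add: sum_distrib_right[symmetric])
    qed
    also have "\<dots> = (\<Sum>x\<in>UNIV. \<Sum>z\<in>UNIV. \<Sum>y\<in>UNIV. \<Sum>w\<in>UNIV. Q$y$b * Q$w$d * (matrix_inv g $x$z * D x y z w))"
      unfolding G_def by (simp add: sum_distrib_left mult_ac)
    also have "\<dots> = (\<Sum>y\<in>UNIV. \<Sum>w\<in>UNIV. \<Sum>x\<in>UNIV. \<Sum>z\<in>UNIV. Q$y$b * Q$w$d * (matrix_inv g $x$z * D x y z w))"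
      by (rule L4)
    also have "\<dots> = (\<Sum>y\<in>UNIV. \<Sum>w\<in>UNIV. Q$y$b * Q$w$d * (\<Sum>x\<in>UNIV. \<Sum>z\<in>UNIV. matrix_inv g $x$z * D x y z w))"
      by (simp add: sum_distrib_left)
    also have "\<dots> = 0" using tr by simp
    finally show ?thesis .
  qed
  have Xtr': "X 1 b 1 d + X 2 b 2 d + X 3 b 3 d = X 0 b 0 d" for b d
    using Xtr[of b d] by (simp add: s4 minkowski_def)
  have Xz: "X a b c d = 0" for a b c d
    by (rule zero3d[OF X1 X2 X3 X0 Xtr'])
  have "(\<Sum>x\<in>UNIV. Q$x$a * (\<Sum>y\<in>UNIV. Q$y$b * (\<Sum>z\<in>UNIV. Q$z$c * (\<Sum>w\<in>UNIV. Q$w$d * D x y z w)))) = 0" for a b c d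
  proof -
    have "(\<Sum>x\<in>UNIV. Q$x$a * (\<Sum>y\<in>UNIV. Q$y$b * (\<Sum>z\<in>UNIV. Q$z$c * (\<Sum>w\<in>UNIV. Q$w$d * D x y z w)))) = X a b c d"
      unfolding X_def tr4_def apply (simp only: sum_distrib_left)
      by (intro sum.cong refl) (simp add: mult_ac)
    thus ?thesis using Xz[of a b c d] by simp
  qed
  hence "(\<Sum>y\<in>UNIV. Q$y$b * (\<Sum>z\<in>UNIV. Q$z$c * (\<Sum>w\<in>UNIV. Q$w$d * D x y z w))) = 0" for x b c d
    by (rule peel[OF iQ])
  hence "(\<Sum>z\<in>UNIV. Q$z$c * (\<Sum>w\<in>UNIV. Q$w$d * D x y z w)) = 0" for x y c d
    by (rule peel[OF iQ])
  hence "(\<Sum>w\<in>UNIV. Q$w$d * D x y z w) = 0" for x y z d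
    by (rule peel[OF iQ])
  thus ?thesis by (rule peel[OF iQ])
qed

lemma antisym_sum:
  fixes Y :: "4 \<Rightarrow> 4 \<Rightarrow> real"
  assumes "\<And>a b. Y a b = - Y b a"
  shows "(\<Sum>a\<in>UNIV. \<Sum>b\<in>UNIV. u a * u b * Y a b) = 0"
proof -
  let ?S = "(\<Sum>a\<in>UNIV. \<Sum>b\<in>UNIV. u a * u b * Y a b)"
  have "?S = (\<Sum>b\<in>UNIV. \<Sum>a\<in>UNIV. u a * u b * Y a b)" by (rule sum.swap)
  also have "\<dots> = (\<Sum>b\<in>UNIV. \<Sum>a\<in>UNIV. - (u b * u a * Y b a))"
    by (intro sum.cong refl) (subst assms, simp)
  also have "\<dots> = - ?S" by (simp add: sum_negf)
  finally show ?thesis by simp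
qed

lemma delta_sum1: "(\<Sum>b\<in>UNIV. (if (a::4) = b then 1 else 0) * (f b::real)) = f a"
  using ex4[of a] by (elim disjE) (simp_all add: s4)
lemma delta_sum2: "(\<Sum>b\<in>UNIV. (if b = (a::4) then 1 else 0) * (f b::real)) = f a"
  using ex4[of a] by (elim disjE) (simp_all add: s4)

lemma main_part:
  fixes g :: "real^4^4" and C :: "4 \<Rightarrow> 4 \<Rightarrow> 4 \<Rightarrow> 4 \<Rightarrow> real" and u :: "4 \<Rightarrow> real"
  assumes lor: "lorentzian g"
    and wt: "weyl_tensor g C"
    and un: "(\<Sum>k\<in>UNIV. lower g u k * u k) = -1"
    and wc: "weyl_compatible g C u"
  shows "(\<forall>a b c d. C a b c d =
            2 * (lower g u a * lower g u d * electric C u b c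
               - lower g u a * lower g u c * electric C u b d
               + lower g u b * lower g u c * electric C u a d
               - lower g u b * lower g u d * electric C u a c)
            + g$a$d * electric C u b c - g$a$c * electric C u b d
            + g$b$c * electric C u a d - g$b$d * electric C u a c)"
proof -
  define gi where "gi = matrix_inv g"
  define ul where "ul = lower g u"
  define E where "E = electric C u"
  have a1: "\<And>a b c d. C a b c d = - C b a c d" and a2: "\<And>a b c d. C a b c d = - C a b d c"
    and ps: "\<And>a b c d. C a b c d = C c d a b"
    and trC: "\<And>b d. (\<Sum>a\<in>UNIV. \<Sum>c\<in>UNIV. gi$a$c * C a b c d) = 0"
    using wt unfolding weyl_tensor_def gi_def by blast+
  have hc: "\<And>i j k l. (\<Sum>m\<in>UNIV. (ul i * C j k l m + ul j * C k i l m + ul k * C i j l m) * u m) = 0"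
    using wc unfolding weyl_compatible_def ul_def by blast
  have uu: "(\<Sum>k\<in>UNIV. ul k * u k) = -1" using un unfolding ul_def .
  obtain Q k where QQ: "transpose Q ** g ** Q = minkowski" and iQ: "invertible Q"
    using frame[OF lor un] by blast
  have gig0: "gi ** g = mat 1" using ginv_frame[OF QQ iQ] unfolding gi_def by simp
  have gim: "gi = Q ** minkowski ** transpose Q" using ginv_frame[OF QQ iQ] unfolding gi_def by simp
  have gsym: "g$a$b = g$b$a" for a b
  proof -
    have "transpose g = g" using lor unfolding lorentzian_def by blast
    hence "(transpose g)$b$a = g$b$a" by simp
    thus ?thesis by (simp add: transpose_def)
  qed
  have mT: "transpose minkowski = minkowski"
    unfolding vec_eq_iff minkowski_def transpose_def by simp
  have gisym: "gi$a$b = gi$b$a" for a b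
  proof -
    have "transpose gi = gi" unfolding gim
      by (simp add: matrix_transpose_mul mT matrix_mul_assoc)
    hence "(transpose gi)$b$a = gi$b$a" by simp
    thus ?thesis by (simp add: transpose_def)
  qed
  have gig: "(\<Sum>c\<in>UNIV. gi$a$c * g$c$b) = (if a = b then 1 else 0)" for a b
  proof -
    have "(gi ** g)$a$b = mat 1 $a$b" using gig0 by simp
    thus ?thesis by (simp add: matrix_matrix_mult_def mat_def)
  qed
  have gig': "(\<Sum>c\<in>UNIV. gi$c$a * g$c$b) = (if a = b then 1 else 0)" for a b
    using gig[of a b] by (simp add: gisym)
  have gig2: "(\<Sum>c\<in>UNIV. gi$a$c * g$b$c) = (if a = b then 1 else 0)" for a b
    using gig[of a b] by (simp add: gsym)
  have F1: "(\<Sum>c\<in>UNIV. gi$a$c * ul c) = u a" for a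
  proof -
    have "(\<Sum>c\<in>UNIV. gi$a$c * ul c) = (\<Sum>c\<in>UNIV. \<Sum>b\<in>UNIV. gi$a$c * g$c$b * u b)"
      unfolding ul_def lower_def by (simp add: sum_distrib_left mult.assoc)
    also have "\<dots> = (\<Sum>b\<in>UNIV. \<Sum>c\<in>UNIV. gi$a$c * g$c$b * u b)" by (rule sum.swap)
    also have "\<dots> = (\<Sum>b\<in>UNIV. (\<Sum>c\<in>UNIV. gi$a$c * g$c$b) * u b)" by (simp add: sum_distrib_right)
    also have "\<dots> = u a" by (simp add: gig delta_sum1 delta_sum2)
    finally show ?thesis .
  qed
  have F1': "(\<Sum>a\<in>UNIV. gi$a$c * ul a) = u c" for c
    using F1[of c] by (simp add: gisym)
  have Edef: "E a d = (\<Sum>b\<in>UNIV. \<Sum>c\<in>UNIV. u b * u c * C a b c d)" for a d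
    unfolding E_def electric_def ..
  have E1: "E a d = E d a" for a d
  proof -
    have r: "C d b c a = C a c b d" for b c using a1 a2 ps by metis
    have "E d a = (\<Sum>b\<in>UNIV. \<Sum>c\<in>UNIV. u b * u c * C a c b d)" unfolding Edef by (simp add: r)
    also have "\<dots> = (\<Sum>c\<in>UNIV. \<Sum>b\<in>UNIV. u b * u c * C a c b d)" by (rule sum.swap)
    also have "\<dots> = E a d" unfolding Edef by (intro sum.cong refl) (simp add: mult_ac)
    finally show ?thesis by simp
  qed
  have E2: "(\<Sum>a\<in>UNIV. u a * E a d) = 0" for d
  proof -
    have "(\<Sum>a\<in>UNIV. u a * E a d) = (\<Sum>a\<in>UNIV. \<Sum>b\<in>UNIV. u a * u b * (\<Sum>c\<in>UNIV. u c * C a b c d))"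
      unfolding Edef apply (simp only: sum_distrib_left)
      by (intro sum.cong refl) (simp add: mult_ac)
    also have "\<dots> = 0"
    proof (rule antisym_sum)
      fix a b
      have "C a b c d = - C b a c d" for c by (rule a1)
      thus "(\<Sum>c\<in>UNIV. u c * C a b c d) = - (\<Sum>c\<in>UNIV. u c * C b a c d)"
        by (simp add: sum_negf[symmetric])
    qed
    finally show ?thesis .
  qed
  have E2': "(\<Sum>d\<in>UNIV. E a d * u d) = 0" for a
    using E2[of a] by (simp add: E1 mult.commute)
  have E3: "(\<Sum>a\<in>UNIV. \<Sum>c\<in>UNIV. gi$a$c * E a c) = 0"
  proof -
    have "(\<Sum>a\<in>UNIV. \<Sum>c\<in>UNIV. gi$a$c * E a c) = (\<Sum>a\<in>UNIV. \<Sum>c\<in>UNIV. \<Sum>x\<in>UNIV. \<Sum>y\<in>UNIV. u x * u y * (gi$a$c * C a x y c))"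
      unfolding Edef apply (simp only: sum_distrib_left)
      by (intro sum.cong refl) (simp add: mult_ac)
    also have "\<dots> = (\<Sum>x\<in>UNIV. \<Sum>y\<in>UNIV. \<Sum>a\<in>UNIV. \<Sum>c\<in>UNIV. u x * u y * (gi$a$c * C a x y c))"
      by (rule L4)
    also have "\<dots> = (\<Sum>x\<in>UNIV. \<Sum>y\<in>UNIV. u x * u y * (\<Sum>a\<in>UNIV. \<Sum>c\<in>UNIV. gi$a$c * C a x y c))"
      by (simp add: sum_distrib_left)
    also have "\<dots> = 0"
    proof -
      have "(\<Sum>a\<in>UNIV. \<Sum>c\<in>UNIV. gi$a$c * C a x y c) = 0" for x y
      proof -
        have "(\<Sum>a\<in>UNIV. \<Sum>c\<in>UNIV. gi$a$c * C a x y c) = - (\<Sum>a\<in>UNIV. \<Sum>c\<in>UNIV. gi$a$c * C a x c y)"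
          by (simp add: a2[of _ x y] sum_negf[symmetric])
        thus ?thesis using trC[of x y] by simp
      qed
      thus ?thesis by simp
    qed
    finally show ?thesis .
  qed
  have K: "(\<Sum>m\<in>UNIV. C j k l m * u m) = ul k * E j l - ul j * E k l" for j k l
  proof -
    have s1: "(\<Sum>i\<in>UNIV. \<Sum>m\<in>UNIV. u i * u m * C k i l m) = - E k l"
      unfolding Edef by (simp add: a2[of k _ l] sum_negf)
    have r2: "C i j l m = C j i m l" for i m using a1 a2 by metis
    have s2: "(\<Sum>i\<in>UNIV. \<Sum>m\<in>UNIV. u i * u m * C i j l m) = E j l"
      unfolding Edef by (simp add: r2)
    have "0 = (\<Sum>i\<in>UNIV. u i * (\<Sum>m\<in>UNIV. (ul i * C j k l m + ul j * C k i l m + ul k * C i j l m) * u m))"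
      using hc by simp
    also have "\<dots> = (\<Sum>i\<in>UNIV. ul i * u i) * (\<Sum>m\<in>UNIV. C j k l m * u m)
        + ul j * (\<Sum>i\<in>UNIV. \<Sum>m\<in>UNIV. u i * u m * C k i l m)
        + ul k * (\<Sum>i\<in>UNIV. \<Sum>m\<in>UNIV. u i * u m * C i j l m)"
      by (simp add: s4 algebra_simps)
    finally have "0 = - (\<Sum>m\<in>UNIV. C j k l m * u m) - ul j * E k l + ul k * E j l"
      unfolding s1 s2 uu by simp
    thus ?thesis by simp
  qed
  define R where "R a b c d = 2 * (ul a * ul d * E b c - ul a * ul c * E b d + ul b * ul c * E a d - ul b * ul d * E a c)
            + g$a$d * E b c - g$a$c * E b d + g$b$c * E a d - g$b$d * E a c" for a b c d
  have R1: "R a b c d = - R b a c d" for a b c d unfolding R_def by (simp add: algebra_simps)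
  have R2: "R a b c d = - R a b d c" for a b c d unfolding R_def by (simp add: algebra_simps)
  have R3: "R a b c d = R c d a b" for a b c d unfolding R_def
    using E1[of a b] E1[of a c] E1[of a d] E1[of b c] E1[of b d] E1[of c d]
      gsym[of a b] gsym[of a c] gsym[of a d] gsym[of b c] gsym[of b d] gsym[of c d]
    by (simp add: algebra_simps)
  have Ru: "(\<Sum>d\<in>UNIV. R a b c d * u d) = ul b * E a c - ul a * E b c" for a b c
  proof -
    have "(\<Sum>d\<in>UNIV. R a b c d * u d) =
      2 * (ul a * E b c * (\<Sum>d\<in>UNIV. ul d * u d) - ul a * ul c * (\<Sum>d\<in>UNIV. E b d * u d)
        + ul b * ul c * (\<Sum>d\<in>UNIV. E a d * u d) - ul b * E a c * (\<Sum>d\<in>UNIV. ul d * u d))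
      + E b c * (\<Sum>d\<in>UNIV. g$a$d * u d) - g$a$c * (\<Sum>d\<in>UNIV. E b d * u d)
      + g$b$c * (\<Sum>d\<in>UNIV. E a d * u d) - E a c * (\<Sum>d\<in>UNIV. g$b$d * u d)"
      unfolding R_def by (simp add: s4 algebra_simps)
    also have "\<dots> = ul b * E a c - ul a * E b c"
      unfolding uu E2' by (simp add: ul_def lower_def algebra_simps)
    finally show ?thesis .
  qed
  have Rtr: "(\<Sum>a\<in>UNIV. \<Sum>c\<in>UNIV. gi$a$c * R a b c d) = 0" for b d
  proof -
    define T1 where "T1 = (\<Sum>a\<in>UNIV. \<Sum>c\<in>UNIV. gi$a$c * ul a * E b c)"
    define T2 where "T2 = (\<Sum>a\<in>UNIV. \<Sum>c\<in>UNIV. gi$a$c * ul a * ul c)"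
    define T3 where "T3 = (\<Sum>a\<in>UNIV. \<Sum>c\<in>UNIV. gi$a$c * ul c * E a d)"
    define T4 where "T4 = (\<Sum>a\<in>UNIV. \<Sum>c\<in>UNIV. gi$a$c * E a c)"
    define T5 where "T5 = (\<Sum>a\<in>UNIV. \<Sum>c\<in>UNIV. gi$a$c * g$a$d * E b c)"
    define T6 where "T6 = (\<Sum>a\<in>UNIV. \<Sum>c\<in>UNIV. gi$a$c * g$a$c)"
    define T7 where "T7 = (\<Sum>a\<in>UNIV. \<Sum>c\<in>UNIV. gi$a$c * g$b$c * E a d)"
    have lin: "(\<Sum>a\<in>UNIV. \<Sum>c\<in>UNIV. gi$a$c * R a b c d) =
      2 * (ul d * T1 - E b d * T2 + ul b * T3 - ul b * ul d * T4) + T5 - E b d * T6 + T7 - g$b$d * T4"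
      unfolding R_def T1_def T2_def T3_def T4_def T5_def T6_def T7_def by (simp add: s4 algebra_simps)
    have t1: "T1 = 0"
    proof -
      have "T1 = (\<Sum>c\<in>UNIV. \<Sum>a\<in>UNIV. gi$a$c * ul a * E b c)" unfolding T1_def by (rule sum.swap)
      also have "\<dots> = (\<Sum>c\<in>UNIV. (\<Sum>a\<in>UNIV. gi$a$c * ul a) * E b c)" by (simp add: sum_distrib_right)
      also have "\<dots> = (\<Sum>c\<in>UNIV. u c * E c b)" by (simp add: F1' E1)
      finally show ?thesis using E2 by simp
    qed
    have t2: "T2 = -1"
    proof -
      have "T2 = (\<Sum>a\<in>UNIV. ul a * (\<Sum>c\<in>UNIV. gi$a$c * ul c))" unfolding T2_def
        by (simp add: sum_distrib_left mult_ac)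
      also have "\<dots> = -1" using uu by (simp add: F1)
      finally show ?thesis .
    qed
    have t3: "T3 = 0"
    proof -
      have "T3 = (\<Sum>a\<in>UNIV. (\<Sum>c\<in>UNIV. gi$a$c * ul c) * E a d)" unfolding T3_def
        by (simp add: sum_distrib_right)
      thus ?thesis using E2 by (simp add: F1)
    qed
    have t4: "T4 = 0" unfolding T4_def by (rule E3)
    have t5: "T5 = E b d"
    proof -
      have "T5 = (\<Sum>c\<in>UNIV. \<Sum>a\<in>UNIV. gi$a$c * g$a$d * E b c)" unfolding T5_def by (rule sum.swap)
      also have "\<dots> = (\<Sum>c\<in>UNIV. (\<Sum>a\<in>UNIV. gi$a$c * g$a$d) * E b c)" by (simp add: sum_distrib_right)
      also have "\<dots> = E b d" by (simp add: gig' delta_sum1 delta_sum2)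
      finally show ?thesis .
    qed
    have t6: "T6 = 4"
    proof -
      have "T6 = (\<Sum>a::4\<in>UNIV. (1::real))" unfolding T6_def using gig2 by simp
      thus ?thesis by simp
    qed
    have t7: "T7 = E b d"
    proof -
      have "T7 = (\<Sum>a\<in>UNIV. (\<Sum>c\<in>UNIV. gi$a$c * g$b$c) * E a d)" unfolding T7_def
        by (simp add: sum_distrib_right)
      also have "\<dots> = E b d" by (simp add: gig2 delta_sum1 delta_sum2)
      finally show ?thesis .
    qed
    show ?thesis unfolding lin t1 t2 t3 t4 t5 t6 t7 by simp
  qed
  define D where "D a b c d = C a b c d - R a b c d" for a b c d
  have D0: "D a b c d = 0" for a b c d
  proof (rule vanish[OF lor un])
    show "D a b c d = - D b a c d" for a b c d unfolding D_def using a1[of a b c d] R1[of a b c d] by simp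
    show "D a b c d = - D a b d c" for a b c d unfolding D_def using a2[of a b c d] R2[of a b c d] by simp
    show "D a b c d = D c d a b" for a b c d unfolding D_def using ps[of a b c d] R3[of a b c d] by simp
    show "(\<Sum>a\<in>UNIV. \<Sum>c\<in>UNIV. matrix_inv g $a$c * D a b c d) = 0" for b d
      unfolding D_def gi_def[symmetric] using trC[of b d] Rtr[of b d]
      by (simp add: right_diff_distrib sum_subtractf)
    show "(\<Sum>d\<in>UNIV. D a b c d * u d) = 0" for a b c
      unfolding D_def using K[of a b c] Ru[of a b c]
      by (simp add: left_diff_distrib sum_subtractf)
  qed
  show ?thesis
  proof (intro allI)
    fix a b c d
    show "C a b c d = 2 * (lower g u a * lower g u d * electric C u b c
               - lower g u a * lower g u c * electric C u b d
               + lower g u b * lower g u c * electric C u a d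
               - lower g u b * lower g u d * electric C u a c)
            + g$a$d * electric C u b c - g$a$c * electric C u b d
            + g$b$c * electric C u a d - g$b$d * electric C u a c"
      using D0[of a b c d] unfolding D_def R_def ul_def E_def by simp
  qed
qed

lemma pull: "(\<Sum>a\<in>UNIV. \<Sum>b\<in>UNIV. \<Sum>c\<in>UNIV. \<Sum>d\<in>UNIV. \<Sum>x\<in>UNIV. (H a b c d x::real)) =
  (\<Sum>x\<in>UNIV. \<Sum>a\<in>UNIV. \<Sum>b\<in>UNIV. \<Sum>c\<in>UNIV. \<Sum>d\<in>UNIV. H a b c d x)"
proof -
  have "(\<Sum>a\<in>UNIV. \<Sum>b\<in>UNIV. \<Sum>c\<in>UNIV. \<Sum>d\<in>UNIV. \<Sum>x\<in>UNIV. H a b c d x) =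
    (\<Sum>a\<in>UNIV. \<Sum>b\<in>UNIV. \<Sum>c\<in>UNIV. \<Sum>x\<in>UNIV. \<Sum>d\<in>UNIV. H a b c d x)"
    by (rule sum.cong[OF refl], rule sum.cong[OF refl], rule sum.cong[OF refl], rule sum.swap)
  also have "\<dots> = (\<Sum>a\<in>UNIV. \<Sum>b\<in>UNIV. \<Sum>x\<in>UNIV. \<Sum>c\<in>UNIV. \<Sum>d\<in>UNIV. H a b c d x)"
    by (rule sum.cong[OF refl], rule sum.cong[OF refl], rule sum.swap)
  also have "\<dots> = (\<Sum>a\<in>UNIV. \<Sum>x\<in>UNIV. \<Sum>b\<in>UNIV. \<Sum>c\<in>UNIV. \<Sum>d\<in>UNIV. H a b c d x)"
    by (rule sum.cong[OF refl], rule sum.swap)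
  also have "\<dots> = (\<Sum>x\<in>UNIV. \<Sum>a\<in>UNIV. \<Sum>b\<in>UNIV. \<Sum>c\<in>UNIV. \<Sum>d\<in>UNIV. H a b c d x)"
    by (rule sum.swap)
  finally show ?thesis .
qed

lemma L8: "(\<Sum>a\<in>UNIV. \<Sum>b\<in>UNIV. \<Sum>c\<in>UNIV. \<Sum>d\<in>UNIV. \<Sum>x\<in>UNIV. \<Sum>y\<in>UNIV. \<Sum>z\<in>UNIV. \<Sum>w\<in>UNIV. (F a b c d x y z w::real)) =
  (\<Sum>x\<in>UNIV. \<Sum>y\<in>UNIV. \<Sum>z\<in>UNIV. \<Sum>w\<in>UNIV. \<Sum>a\<in>UNIV. \<Sum>b\<in>UNIV. \<Sum>c\<in>UNIV. \<Sum>d\<in>UNIV. F a b c d x y z w)"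
  apply (rule trans[OF pull])
  apply (rule sum.cong[OF refl])
  apply (rule trans[OF pull])
  apply (rule sum.cong[OF refl])
  apply (rule trans[OF pull])
  apply (rule sum.cong[OF refl])
  apply (rule pull)
  done

lemma L_d: "(\<Sum>a\<in>UNIV. \<Sum>b\<in>UNIV. \<Sum>c\<in>UNIV. \<Sum>d\<in>UNIV. (F a b c d::real)) = (\<Sum>a\<in>UNIV. \<Sum>d\<in>UNIV. \<Sum>b\<in>UNIV. \<Sum>c\<in>UNIV. F a b c d)"
  apply (rule trans[OF L_in3]) apply (rule trans[OF L_in2]) by (rule refl)

lemma L_mid: "(\<Sum>x\<in>UNIV. \<Sum>y\<in>UNIV. \<Sum>z\<in>UNIV. \<Sum>w\<in>UNIV. (F x y z w::real)) = (\<Sum>y\<in>UNIV. \<Sum>z\<in>UNIV. \<Sum>x\<in>UNIV. \<Sum>w\<in>UNIV. F x y z w)"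
  apply (rule trans[OF sum.swap]) apply (rule trans[OF L_in2]) by (rule refl)

lemma fact14:
  "(\<Sum>a\<in>UNIV. \<Sum>b\<in>UNIV. \<Sum>c\<in>UNIV. \<Sum>d\<in>UNIV. al a d * M b c * tr4 G T a b c d) =
   (\<Sum>x\<in>UNIV. \<Sum>y\<in>UNIV. \<Sum>z\<in>UNIV. \<Sum>w\<in>UNIV. T x y z w * (\<Sum>a\<in>UNIV. \<Sum>d\<in>UNIV. al a d * G$x$a * G$w$d)
        * (\<Sum>b\<in>UNIV. \<Sum>c\<in>UNIV. M b c * G$y$b * G$z$c))"
proof -
  have "(\<Sum>a\<in>UNIV. \<Sum>b\<in>UNIV. \<Sum>c\<in>UNIV. \<Sum>d\<in>UNIV. al a d * M b c * tr4 G T a b c d) =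
    (\<Sum>a\<in>UNIV. \<Sum>b\<in>UNIV. \<Sum>c\<in>UNIV. \<Sum>d\<in>UNIV. \<Sum>x\<in>UNIV. \<Sum>y\<in>UNIV. \<Sum>z\<in>UNIV. \<Sum>w\<in>UNIV.
       al a d * M b c * (T x y z w * G$x$a * G$y$b * G$z$c * G$w$d))"
    unfolding tr4_def by (simp only: sum_distrib_left)
  also have "\<dots> = (\<Sum>x\<in>UNIV. \<Sum>y\<in>UNIV. \<Sum>z\<in>UNIV. \<Sum>w\<in>UNIV. \<Sum>a\<in>UNIV. \<Sum>b\<in>UNIV. \<Sum>c\<in>UNIV. \<Sum>d\<in>UNIV.
       al a d * M b c * (T x y z w * G$x$a * G$y$b * G$z$c * G$w$d))"
    by (rule L8)
  also have "\<dots> = (\<Sum>x\<in>UNIV. \<Sum>y\<in>UNIV. \<Sum>z\<in>UNIV. \<Sum>w\<in>UNIV. T x y z w * (\<Sum>a\<in>UNIV. \<Sum>d\<in>UNIV. al a d * G$x$a * G$w$d)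
        * (\<Sum>b\<in>UNIV. \<Sum>c\<in>UNIV. M b c * G$y$b * G$z$c))"
  proof (intro sum.cong refl)
    fix x y z w
    have "(\<Sum>a\<in>UNIV. \<Sum>b\<in>UNIV. \<Sum>c\<in>UNIV. \<Sum>d\<in>UNIV. al a d * M b c * (T x y z w * G$x$a * G$y$b * G$z$c * G$w$d))
      = (\<Sum>b\<in>UNIV. \<Sum>c\<in>UNIV. \<Sum>a\<in>UNIV. \<Sum>d\<in>UNIV. al a d * M b c * (T x y z w * G$x$a * G$y$b * G$z$c * G$w$d))"
      by (rule L_mid)
    also have "\<dots> = T x y z w * (\<Sum>a\<in>UNIV. \<Sum>d\<in>UNIV. al a d * G$x$a * G$w$d)
        * (\<Sum>b\<in>UNIV. \<Sum>c\<in>UNIV. M b c * G$y$b * G$z$c)"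
      apply (simp only: sum_distrib_left sum_distrib_right)
      by (intro sum.cong refl) (simp add: mult_ac)
    finally show "(\<Sum>a\<in>UNIV. \<Sum>b\<in>UNIV. \<Sum>c\<in>UNIV. \<Sum>d\<in>UNIV. al a d * M b c * (T x y z w * G$x$a * G$y$b * G$z$c * G$w$d))
      = T x y z w * (\<Sum>a\<in>UNIV. \<Sum>d\<in>UNIV. al a d * G$x$a * G$w$d)
        * (\<Sum>b\<in>UNIV. \<Sum>c\<in>UNIV. M b c * G$y$b * G$z$c)" .
  qed
  finally show ?thesis .
qed


lemma sq_part:
  fixes g :: "real^4^4" and C :: "4 \<Rightarrow> 4 \<Rightarrow> 4 \<Rightarrow> 4 \<Rightarrow> real" and u :: "4 \<Rightarrow> real"
  assumes lor: "lorentzian g"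
    and wt: "weyl_tensor g C"
    and un: "(\<Sum>k\<in>UNIV. lower g u k * u k) = -1"
    and CR0: "\<And>a b c d. C a b c d =
            2 * (lower g u a * lower g u d * electric C u b c
               - lower g u a * lower g u c * electric C u b d
               + lower g u b * lower g u c * electric C u a d
               - lower g u b * lower g u d * electric C u a c)
            + g$a$d * electric C u b c - g$a$c * electric C u b d
            + g$b$c * electric C u a d - g$b$d * electric C u a c"
  shows "sq4 g C = 8 * sq2 g (electric C u)"
proof -
  define gi where "gi = matrix_inv g"
  define ul where "ul = lower g u"
  define E where "E = electric C u"
  have a1: "\<And>a b c d. C a b c d = - C b a c d" and a2: "\<And>a b c d. C a b c d = - C a b d c"
    and ps: "\<And>a b c d. C a b c d = C c d a b"
    and trC: "\<And>b d. (\<Sum>a\<in>UNIV. \<Sum>c\<in>UNIV. gi$a$c * C a b c d) = 0"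
    using wt unfolding weyl_tensor_def gi_def by blast+
  obtain Q k where QQ: "transpose Q ** g ** Q = minkowski" and iQ: "invertible Q"
    using frame[OF lor un] by blast
  have gig0: "gi ** g = mat 1" using ginv_frame[OF QQ iQ] unfolding gi_def by simp
  have gim: "gi = Q ** minkowski ** transpose Q" using ginv_frame[OF QQ iQ] unfolding gi_def by simp
  have mT: "transpose minkowski = minkowski"
    unfolding vec_eq_iff minkowski_def transpose_def by simp
  have gisym: "gi$a$b = gi$b$a" for a b
  proof -
    have "transpose gi = gi" unfolding gim
      by (simp add: matrix_transpose_mul mT matrix_mul_assoc)
    hence "(transpose gi)$b$a = gi$b$a" by simp
    thus ?thesis by (simp add: transpose_def)
  qed
  have gig: "(\<Sum>c\<in>UNIV. gi$a$c * g$c$b) = (if a = b then 1 else 0)" for a b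
  proof -
    have "(gi ** g)$a$b = mat 1 $a$b" using gig0 by simp
    thus ?thesis by (simp add: matrix_matrix_mult_def mat_def)
  qed
  have F1: "(\<Sum>c\<in>UNIV. gi$a$c * ul c) = u a" for a
  proof -
    have "(\<Sum>c\<in>UNIV. gi$a$c * ul c) = (\<Sum>c\<in>UNIV. \<Sum>b\<in>UNIV. gi$a$c * g$c$b * u b)"
      unfolding ul_def lower_def by (simp add: sum_distrib_left mult.assoc)
    also have "\<dots> = (\<Sum>b\<in>UNIV. \<Sum>c\<in>UNIV. gi$a$c * g$c$b * u b)" by (rule sum.swap)
    also have "\<dots> = (\<Sum>b\<in>UNIV. (\<Sum>c\<in>UNIV. gi$a$c * g$c$b) * u b)" by (simp add: sum_distrib_right)
    also have "\<dots> = u a" by (simp add: gig delta_sum1 delta_sum2)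
    finally show ?thesis .
  qed
  have Edef: "E a d = (\<Sum>b\<in>UNIV. \<Sum>c\<in>UNIV. u b * u c * C a b c d)" for a d
    unfolding E_def electric_def ..
  define R where "R a b c d = 2 * (ul a * ul d * E b c - ul a * ul c * E b d + ul b * ul c * E a d - ul b * ul d * E a c)
            + g$a$d * E b c - g$a$c * E b d + g$b$c * E a d - g$b$d * E a c" for a b c d
  have CR: "C a b c d = R a b c d" for a b c d unfolding R_def ul_def E_def by (rule CR0)
  define Cu where "Cu = tr4 gi C"
  have f1: "(\<lambda>x y z w. C y x z w) = (\<lambda>x y z w. - C x y z w)" using a1 by (intro ext) metis
  have f2: "(\<lambda>x y z w. C x y w z) = (\<lambda>x y z w. - C x y z w)" using a2 by (intro ext) metis
  have Cu1: "Cu a b c d = - Cu b a c d" for a b c d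
    unfolding Cu_def tr4_swap12[of gi C a b] f1 tr4_neg by simp
  have Cu2: "Cu a b c d = - Cu a b d c" for a b c d
    unfolding Cu_def tr4_swap34[of gi C a b c d] f2 tr4_neg by simp
  have Cu12: "Cu a b c d = Cu b a d c" for a b c d using Cu1 Cu2 by metis
  have S1: "sq4 g C = (\<Sum>a\<in>UNIV. \<Sum>b\<in>UNIV. \<Sum>c\<in>UNIV. \<Sum>d\<in>UNIV. R a b c d * Cu a b c d)"
  proof -
    have "sq4 g C = (\<Sum>a\<in>UNIV. \<Sum>b\<in>UNIV. \<Sum>c\<in>UNIV. \<Sum>d\<in>UNIV. C a b c d * Cu a b c d)"
      unfolding sq4_def Cu_def tr4_def gi_def[symmetric] apply (simp only: sum_distrib_left)
      by (intro sum.cong refl) (simp add: gisym mult_ac)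
    thus ?thesis by (simp only: CR)
  qed
  define P1 where "P1 = (\<Sum>a\<in>UNIV. \<Sum>b\<in>UNIV. \<Sum>c\<in>UNIV. \<Sum>d\<in>UNIV. ul a * ul d * E b c * Cu a b c d)"
  define P2 where "P2 = (\<Sum>a\<in>UNIV. \<Sum>b\<in>UNIV. \<Sum>c\<in>UNIV. \<Sum>d\<in>UNIV. ul a * ul c * E b d * Cu a b c d)"
  define P3 where "P3 = (\<Sum>a\<in>UNIV. \<Sum>b\<in>UNIV. \<Sum>c\<in>UNIV. \<Sum>d\<in>UNIV. ul b * ul c * E a d * Cu a b c d)"
  define P4 where "P4 = (\<Sum>a\<in>UNIV. \<Sum>b\<in>UNIV. \<Sum>c\<in>UNIV. \<Sum>d\<in>UNIV. ul b * ul d * E a c * Cu a b c d)"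
  define P5 where "P5 = (\<Sum>a\<in>UNIV. \<Sum>b\<in>UNIV. \<Sum>c\<in>UNIV. \<Sum>d\<in>UNIV. g$a$d * E b c * Cu a b c d)"
  define P6 where "P6 = (\<Sum>a\<in>UNIV. \<Sum>b\<in>UNIV. \<Sum>c\<in>UNIV. \<Sum>d\<in>UNIV. g$a$c * E b d * Cu a b c d)"
  define P7 where "P7 = (\<Sum>a\<in>UNIV. \<Sum>b\<in>UNIV. \<Sum>c\<in>UNIV. \<Sum>d\<in>UNIV. g$b$c * E a d * Cu a b c d)"
  define P8 where "P8 = (\<Sum>a\<in>UNIV. \<Sum>b\<in>UNIV. \<Sum>c\<in>UNIV. \<Sum>d\<in>UNIV. g$b$d * E a c * Cu a b c d)"
  have lin: "(\<Sum>a\<in>UNIV. \<Sum>b\<in>UNIV. \<Sum>c\<in>UNIV. \<Sum>d\<in>UNIV. R a b c d * Cu a b c d)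
     = 2 * P1 - 2 * P2 + 2 * P3 - 2 * P4 + P5 - P6 + P7 - P8"
  proof -
    have "(\<Sum>a\<in>UNIV. \<Sum>b\<in>UNIV. \<Sum>c\<in>UNIV. \<Sum>d\<in>UNIV. R a b c d * Cu a b c d) =
      (\<Sum>a\<in>UNIV. \<Sum>b\<in>UNIV. \<Sum>c\<in>UNIV. \<Sum>d\<in>UNIV.
         2 * (ul a * ul d * E b c * Cu a b c d) - 2 * (ul a * ul c * E b d * Cu a b c d)
       + 2 * (ul b * ul c * E a d * Cu a b c d) - 2 * (ul b * ul d * E a c * Cu a b c d)
       + g$a$d * E b c * Cu a b c d - g$a$c * E b d * Cu a b c d
       + g$b$c * E a d * Cu a b c d - g$b$d * E a c * Cu a b c d)"
      by (intro sum.cong refl) (simp add: R_def algebra_simps)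
    also have "\<dots> = 2 * P1 - 2 * P2 + 2 * P3 - 2 * P4 + P5 - P6 + P7 - P8"
      unfolding P1_def P2_def P3_def P4_def P5_def P6_def P7_def P8_def
      by (simp only: sum.distrib sum_subtractf sum_distrib_left[symmetric])
    finally show ?thesis .
  qed
  define Eu where "Eu y z = (\<Sum>b\<in>UNIV. \<Sum>c\<in>UNIV. E b c * gi$y$b * gi$z$c)" for y z
  have p1: "P1 = sq2 g E"
  proof -
    have "P1 = (\<Sum>x\<in>UNIV. \<Sum>y\<in>UNIV. \<Sum>z\<in>UNIV. \<Sum>w\<in>UNIV. C x y z w * (\<Sum>a\<in>UNIV. \<Sum>d\<in>UNIV. ul a * ul d * gi$x$a * gi$w$d)
        * (\<Sum>b\<in>UNIV. \<Sum>c\<in>UNIV. E b c * gi$y$b * gi$z$c))"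
      unfolding P1_def Cu_def by (rule fact14)
    also have "\<dots> = (\<Sum>x\<in>UNIV. \<Sum>y\<in>UNIV. \<Sum>z\<in>UNIV. \<Sum>w\<in>UNIV. C x y z w * (u x * u w) * Eu y z)"
    proof -
      have "(\<Sum>a\<in>UNIV. \<Sum>d\<in>UNIV. ul a * ul d * gi$x$a * gi$w$d) = (\<Sum>a\<in>UNIV. gi$x$a * ul a) * (\<Sum>d\<in>UNIV. gi$w$d * ul d)" for x w
        unfolding sum_product by (intro sum.cong refl) (simp add: mult_ac)
      thus ?thesis unfolding Eu_def by (simp add: F1)
    qed
    also have "\<dots> = (\<Sum>y\<in>UNIV. \<Sum>z\<in>UNIV. \<Sum>x\<in>UNIV. \<Sum>w\<in>UNIV. C x y z w * (u x * u w) * Eu y z)"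
      by (rule L_mid)
    also have "\<dots> = (\<Sum>y\<in>UNIV. \<Sum>z\<in>UNIV. Eu y z * (\<Sum>x\<in>UNIV. \<Sum>w\<in>UNIV. u x * u w * C x y z w))"
      apply (simp only: sum_distrib_left)
      by (intro sum.cong refl) (simp add: mult_ac)
    also have "\<dots> = (\<Sum>y\<in>UNIV. \<Sum>z\<in>UNIV. Eu y z * E y z)"
    proof -
      have "(\<Sum>x\<in>UNIV. \<Sum>w\<in>UNIV. u x * u w * C x y z w) = E y z" for y z
      proof -
        have r: "C x y z w = C y x w z" for x w using a1 a2 by metis
        show ?thesis unfolding Edef by (simp add: r)
      qed
      thus ?thesis by simp
    qed
    also have "\<dots> = sq2 g E"
    proof -
      have "sq2 g E = (\<Sum>a\<in>UNIV. \<Sum>b\<in>UNIV. \<Sum>p\<in>UNIV. \<Sum>q\<in>UNIV. E a b * gi$a$p * gi$b$q * E p q)"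
        unfolding sq2_def gi_def ..
      also have "\<dots> = (\<Sum>p\<in>UNIV. \<Sum>q\<in>UNIV. \<Sum>a\<in>UNIV. \<Sum>b\<in>UNIV. E a b * gi$a$p * gi$b$q * E p q)"
        by (rule L4)
      also have "\<dots> = (\<Sum>p\<in>UNIV. \<Sum>q\<in>UNIV. Eu p q * E p q)"
        unfolding Eu_def apply (simp only: sum_distrib_right)
        by (intro sum.cong refl) (simp add: gisym mult_ac)
      finally show ?thesis by simp
    qed
    finally show ?thesis .
  qed
  have p5: "P5 = 0"
  proof -
    have "P5 = (\<Sum>x\<in>UNIV. \<Sum>y\<in>UNIV. \<Sum>z\<in>UNIV. \<Sum>w\<in>UNIV. C x y z w * (\<Sum>a\<in>UNIV. \<Sum>d\<in>UNIV. g$a$d * gi$x$a * gi$w$d)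
        * (\<Sum>b\<in>UNIV. \<Sum>c\<in>UNIV. E b c * gi$y$b * gi$z$c))"
      unfolding P5_def Cu_def by (rule fact14)
    also have "\<dots> = (\<Sum>x\<in>UNIV. \<Sum>y\<in>UNIV. \<Sum>z\<in>UNIV. \<Sum>w\<in>UNIV. C x y z w * gi$w$x * Eu y z)"
    proof -
      have "(\<Sum>a\<in>UNIV. \<Sum>d\<in>UNIV. g$a$d * gi$x$a * gi$w$d) = gi$w$x" for x w
      proof -
        have "(\<Sum>a\<in>UNIV. \<Sum>d\<in>UNIV. g$a$d * gi$x$a * gi$w$d) = (\<Sum>d\<in>UNIV. \<Sum>a\<in>UNIV. g$a$d * gi$x$a * gi$w$d)"
          by (rule sum.swap)
        also have "\<dots> = (\<Sum>d\<in>UNIV. (\<Sum>a\<in>UNIV. gi$x$a * g$a$d) * gi$w$d)"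
          apply (simp only: sum_distrib_right)
          by (intro sum.cong refl) (simp add: mult_ac)
        also have "\<dots> = gi$w$x" by (simp add: gig delta_sum1 delta_sum2)
        finally show ?thesis .
      qed
      thus ?thesis unfolding Eu_def by simp
    qed
    also have "\<dots> = (\<Sum>y\<in>UNIV. \<Sum>z\<in>UNIV. \<Sum>x\<in>UNIV. \<Sum>w\<in>UNIV. C x y z w * gi$w$x * Eu y z)"
      by (rule L_mid)
    also have "\<dots> = (\<Sum>y\<in>UNIV. \<Sum>z\<in>UNIV. Eu y z * (\<Sum>x\<in>UNIV. \<Sum>w\<in>UNIV. gi$w$x * C x y z w))"
      apply (simp only: sum_distrib_left)
      by (intro sum.cong refl) (simp add: mult_ac)
    also have "\<dots> = 0"
    proof -
      have "(\<Sum>x\<in>UNIV. \<Sum>w\<in>UNIV. gi$w$x * C x y z w) = 0" for y z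
      proof -
        have "(\<Sum>x\<in>UNIV. \<Sum>w\<in>UNIV. gi$w$x * C x y z w) = (\<Sum>x\<in>UNIV. \<Sum>w\<in>UNIV. - (gi$x$w * C x y w z))"
          by (intro sum.cong refl) (simp add: gisym a2[of _ y z])
        also have "\<dots> = - (\<Sum>x\<in>UNIV. \<Sum>w\<in>UNIV. gi$x$w * C x y w z)" by (simp add: sum_negf)
        also have "\<dots> = 0" using trC[of y z] by simp
        finally show ?thesis .
      qed
      thus ?thesis by simp
    qed
    finally show ?thesis .
  qed
  have p2: "P2 = - P1"
  proof -
    have "P2 = (\<Sum>a\<in>UNIV. \<Sum>b\<in>UNIV. \<Sum>c\<in>UNIV. \<Sum>d\<in>UNIV. - (ul a * ul c * E b d * Cu a b d c))"
      unfolding P2_def by (intro sum.cong refl) (subst Cu2, simp)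
    also have "\<dots> = - (\<Sum>a\<in>UNIV. \<Sum>b\<in>UNIV. \<Sum>c\<in>UNIV. \<Sum>d\<in>UNIV. ul a * ul c * E b d * Cu a b d c)"
      by (simp add: sum_negf)
    also have "(\<Sum>a\<in>UNIV. \<Sum>b\<in>UNIV. \<Sum>c\<in>UNIV. \<Sum>d\<in>UNIV. ul a * ul c * E b d * Cu a b d c) = P1"
      unfolding P1_def apply (rule trans[OF L_in3]) by (rule refl)
    finally show ?thesis .
  qed
  have p3: "P3 = P1"
  proof -
    have "P3 = (\<Sum>a\<in>UNIV. \<Sum>b\<in>UNIV. \<Sum>c\<in>UNIV. \<Sum>d\<in>UNIV. ul b * ul c * E a d * Cu b a d c)"
      unfolding P3_def by (intro sum.cong refl) (subst Cu12, simp)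
    also have "\<dots> = P1"
      unfolding P1_def apply (rule trans[OF sum.swap]) apply (rule trans[OF L_in3]) by (rule refl)
    finally show ?thesis .
  qed
  have p4: "P4 = - P1"
  proof -
    have "P4 = (\<Sum>a\<in>UNIV. \<Sum>b\<in>UNIV. \<Sum>c\<in>UNIV. \<Sum>d\<in>UNIV. - (ul b * ul d * E a c * Cu b a c d))"
      unfolding P4_def by (intro sum.cong refl) (subst Cu1, simp)
    also have "\<dots> = - (\<Sum>a\<in>UNIV. \<Sum>b\<in>UNIV. \<Sum>c\<in>UNIV. \<Sum>d\<in>UNIV. ul b * ul d * E a c * Cu b a c d)"
      by (simp add: sum_negf)
    also have "(\<Sum>a\<in>UNIV. \<Sum>b\<in>UNIV. \<Sum>c\<in>UNIV. \<Sum>d\<in>UNIV. ul b * ul d * E a c * Cu b a c d) = P1"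
      unfolding P1_def apply (rule trans[OF sum.swap]) by (rule refl)
    finally show ?thesis .
  qed
  have p6: "P6 = - P5"
  proof -
    have "P6 = (\<Sum>a\<in>UNIV. \<Sum>b\<in>UNIV. \<Sum>c\<in>UNIV. \<Sum>d\<in>UNIV. - (g$a$c * E b d * Cu a b d c))"
      unfolding P6_def by (intro sum.cong refl) (subst Cu2, simp)
    also have "\<dots> = - (\<Sum>a\<in>UNIV. \<Sum>b\<in>UNIV. \<Sum>c\<in>UNIV. \<Sum>d\<in>UNIV. g$a$c * E b d * Cu a b d c)"
      by (simp add: sum_negf)
    also have "(\<Sum>a\<in>UNIV. \<Sum>b\<in>UNIV. \<Sum>c\<in>UNIV. \<Sum>d\<in>UNIV. g$a$c * E b d * Cu a b d c) = P5"
      unfolding P5_def apply (rule trans[OF L_in3]) by (rule refl)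
    finally show ?thesis .
  qed
  have p7: "P7 = P5"
  proof -
    have "P7 = (\<Sum>a\<in>UNIV. \<Sum>b\<in>UNIV. \<Sum>c\<in>UNIV. \<Sum>d\<in>UNIV. g$b$c * E a d * Cu b a d c)"
      unfolding P7_def by (intro sum.cong refl) (subst Cu12, simp)
    also have "\<dots> = P5"
      unfolding P5_def apply (rule trans[OF sum.swap]) apply (rule trans[OF L_in3]) by (rule refl)
    finally show ?thesis .
  qed
  have p8: "P8 = - P5"
  proof -
    have "P8 = (\<Sum>a\<in>UNIV. \<Sum>b\<in>UNIV. \<Sum>c\<in>UNIV. \<Sum>d\<in>UNIV. - (g$b$d * E a c * Cu b a c d))"
      unfolding P8_def by (intro sum.cong refl) (subst Cu1, simp)
    also have "\<dots> = - (\<Sum>a\<in>UNIV. \<Sum>b\<in>UNIV. \<Sum>c\<in>UNIV. \<Sum>d\<in>UNIV. g$b$d * E a c * Cu b a c d)"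
      by (simp add: sum_negf)
    also have "(\<Sum>a\<in>UNIV. \<Sum>b\<in>UNIV. \<Sum>c\<in>UNIV. \<Sum>d\<in>UNIV. g$b$d * E a c * Cu b a c d) = P5"
      unfolding P5_def apply (rule trans[OF sum.swap]) by (rule refl)
    finally show ?thesis .
  qed
  show ?thesis unfolding S1 lin p2 p3 p4 p6 p7 p8 p5 p1 E_def by simp
qed

theorem proposition3p1:
  fixes g :: "real^4^4" and C :: "4 \<Rightarrow> 4 \<Rightarrow> 4 \<Rightarrow> 4 \<Rightarrow> real" and u :: "4 \<Rightarrow> real"
  assumes "lorentzian g"
    and "weyl_tensor g C"
    and "(\<Sum>k\<in>UNIV. lower g u k * u k) = -1"
    and "weyl_compatible g C u"
  shows "(\<forall>a b c d. C a b c d =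
            2 * (lower g u a * lower g u d * electric C u b c
               - lower g u a * lower g u c * electric C u b d
               + lower g u b * lower g u c * electric C u a d
               - lower g u b * lower g u d * electric C u a c)
            + g$a$d * electric C u b c - g$a$c * electric C u b d
            + g$b$c * electric C u a d - g$b$d * electric C u a c)
         \<and> sq4 g C = 8 * sq2 g (electric C u)"
proof -
  have M: "\<forall>a b c d. C a b c d =
            2 * (lower g u a * lower g u d * electric C u b c
               - lower g u a * lower g u c * electric C u b d
               + lower g u b * lower g u c * electric C u a d
               - lower g u b * lower g u d * electric C u a c)
            + g$a$d * electric C u b c - g$a$c * electric C u b d
            + g$b$c * electric C u a d - g$b$d * electric C u a c"
    by (rule main_part[OF assms])
  have "sq4 g C = 8 * sq2 g (electric C u)"
    by (rule sq_part[OF assms(1,2,3)]) (use M in blast)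
  with M show ?thesis by blast
qed

end
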